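(* Let $(\Omega,d)$ be an $A$-uniform space with completion $\overline\Omega$, and let $a\in\partial\Omega=\overline\Omega\setminus\Omega$. Then $\overline\Omega\setminus\{a\}$ is locally annularly quasiconvex around $a$ with $\Lambda=4A$.
   Context: $A$-uniform: $(\Omega,d)$ noncomplete and any $x,y\in\Omega$ are joined by an arc-length parametrized curve $\gamma:[0,l]\to\Omega$ with $l\le A\,d(x,y)$ and $\operatorname{dist}(\gamma(t),\partial\Omega)\ge\frac1A\min\{t,l-t\}$. A metric space $Z$ is locally annularly quasiconvex around $x_0$ if there exist $\Lambda\ge2$ and $r_0>0$ such that for every $0<r\le r_0$, each pair of points $x,y\in B(x_0,2r)\setminus B(x_0,r)$ can be connected within $B(x_0,\Lambda r)\setminus B(x_0,r/\Lambda)$ by a curve of length at most $\Lambda d(x,y)$. *)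

theory Defs
  imports "HOL-Analysis.Analysis" "HOL-Library.Extended_Real"
begin

definition curve_length :: "(real \<Rightarrow> 'a::metric_space) \<Rightarrow> real \<Rightarrow> real \<Rightarrow> ereal" where
  "curve_length g a b =
     (SUP pn \<in> {(p, n). mono_on {..n} (p :: nat \<Rightarrow> real) \<and> p 0 = a \<and> p n = b}.
        ereal (\<Sum>i<snd pn. dist (g (fst pn i)) (g (fst pn (Suc i)))))"

definition arclength_param :: "(real \<Rightarrow> 'a::metric_space) \<Rightarrow> real \<Rightarrow> bool" where
  "arclength_param g l \<longleftrightarrow> 0 \<le> l \<and> continuous_on {0..l} g \<and>
     (\<forall>s t. 0 \<le> s \<and> s \<le> t \<and> t \<le> l \<longrightarrow> curve_length g s t = ereal (t - s))"

text \<open>The boundary of \<Omega> inside its completion, realised as the closure of \<Omega>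
  in an ambient complete metric space.\<close>
definition mbdry :: "'a::metric_space set \<Rightarrow> 'a set" where
  "mbdry \<Omega> = closure \<Omega> - \<Omega>"

definition uniform_space :: "real \<Rightarrow> 'a::metric_space set \<Rightarrow> bool" where
  "uniform_space A \<Omega> \<longleftrightarrow> \<not> complete \<Omega> \<and>
     (\<forall>x\<in>\<Omega>. \<forall>y\<in>\<Omega>. \<exists>g l. arclength_param g l \<and> g 0 = x \<and> g l = y \<and>
        g ` {0..l} \<subseteq> \<Omega> \<and> l \<le> A * dist x y \<and>
        (\<forall>t\<in>{0..l}. infdist (g t) (mbdry \<Omega>) \<ge> min t (l - t) / A))"

definition loc_annular_qc :: "'a::metric_space set \<Rightarrow> 'a \<Rightarrow> real \<Rightarrow> bool" where
  "loc_annular_qc Z x0 \<Lambda> \<longleftrightarrow> \<Lambda> \<ge> 2 \<and> (\<exists>r0>0. \<forall>r. 0 < r \<and> r \<le> r0 \<longrightarrow>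
     (\<forall>x\<in>Z \<inter> (ball x0 (2*r) - ball x0 r). \<forall>y\<in>Z \<inter> (ball x0 (2*r) - ball x0 r).
        \<exists>g. path g \<and> pathstart g = x \<and> pathfinish g = y \<and>
          path_image g \<subseteq> Z \<inter> (ball x0 (\<Lambda>*r) - ball x0 (r/\<Lambda>)) \<and>
          curve_length g 0 1 \<le> ereal (\<Lambda> * dist x y)))"

end

theory Submission
  imports Defs
begin

lemma arclen_dist:
  assumes "arclength_param g l" "0 \<le> s" "s \<le> t" "t \<le> l"
  shows "dist (g s) (g t) \<le> t - s"
proof -
  define p where "p = (\<lambda>i::nat. if i = 0 then s else t)"
  have mem: "(p, 1::nat) \<in> {(p, n). mono_on {..n} (p :: nat \<Rightarrow> real) \<and> p 0 = s \<and> p n = t}"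
    using assms(3) by (auto simp: p_def mono_on_def)
  have "ereal (\<Sum>i<snd (p,1::nat). dist (g (fst (p,1::nat) i)) (g (fst (p,1::nat) (Suc i))))
        \<le> curve_length g s t"
    unfolding curve_length_def by (rule SUP_upper2[OF mem]) simp
  also have "\<dots> = ereal (t - s)" using assms unfolding arclength_param_def by auto
  finally show ?thesis by (simp add: p_def)
qed

lemma arclen_dist_abs:
  assumes "arclength_param g l" "0 \<le> s" "s \<le> l" "0 \<le> t" "t \<le> l"
  shows "dist (g s) (g t) \<le> \<bar>t - s\<bar>"
proof (cases "s \<le> t")
  case True then show ?thesis using arclen_dist[OF assms(1), of s t] assms by auto
next
  case False then show ?thesis using arclen_dist[OF assms(1), of t s] assms
    by (auto simp: dist_commute)
qed

lemma lipschitz_curve_length: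
  assumes "L-lipschitz_on {0..1} g"
  shows "curve_length g 0 1 \<le> ereal L"
  unfolding curve_length_def
proof (rule SUP_least)
  fix pn assume "pn \<in> {(p, n). mono_on {..n} (p :: nat \<Rightarrow> real) \<and> p 0 = 0 \<and> p n = 1}"
  then obtain p n where pn: "pn = (p, n)" and m: "mono_on {..n} p" and p0: "p 0 = 0" and pn1: "p n = 1"
    by auto
  have mono: "p i \<le> p j" if "i \<le> j" "j \<le> n" for i j
    using m that by (auto simp: mono_on_def)
  have rng: "p i \<in> {0..1}" if "i \<le> n" for i
    using mono[of 0 i] mono[of i n] that p0 pn1 by auto
  have "(\<Sum>i<n. dist (g (p i)) (g (p (Suc i)))) \<le> (\<Sum>i<n. L * (p (Suc i) - p i))"
  proof (rule sum_mono)
    fix i assume "i \<in> {..<n}"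
    then have i: "i < n" by auto
    have "dist (g (p i)) (g (p (Suc i))) \<le> L * dist (p i) (p (Suc i))"
      by (rule lipschitz_onD[OF assms]) (use rng i in auto)
    also have "dist (p i) (p (Suc i)) = p (Suc i) - p i"
      using mono[of i "Suc i"] i by (simp add: dist_real_def)
    finally show "dist (g (p i)) (g (p (Suc i))) \<le> L * (p (Suc i) - p i)" .
  qed
  also have "\<dots> = L * (\<Sum>i<n. p (Suc i) - p i)" by (simp add: sum_distrib_left)
  also have "\<dots> = L" by (simp add: sum_lessThan_telescope p0 pn1)
  finally show "ereal (\<Sum>i<snd pn. dist (g (fst pn i)) (g (fst pn (Suc i)))) \<le> ereal L"
    by (simp add: pn)
qed

lemma half_pow_mult: "(1/2::real)^k * 2^k = 1"
  by (simp add: power_mult_distrib[symmetric])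

lemma lipschitz_affine:
  assumes "L-lipschitz_on {0..1} f" "\<And>s. s \<in> {a..b} \<Longrightarrow> al * s + be \<in> {0..1}"
  shows "(\<bar>al\<bar>*L)-lipschitz_on {a..b} (\<lambda>s. f (al * s + be))"
proof (rule lipschitz_onI)
  fix s t assume st: "s \<in> {a..b}" "t \<in> {a..b}"
  have "dist (f (al * s + be)) (f (al * t + be)) \<le> L * dist (al * s + be) (al * t + be)"
    by (rule lipschitz_onD[OF assms(1)]) (use assms(2) st in auto)
  also have "dist (al * s + be) (al * t + be) = \<bar>al\<bar> * dist s t"
    by (simp add: dist_real_def abs_mult[symmetric] algebra_simps)
  finally show "dist (f (al * s + be)) (f (al * t + be)) \<le> \<bar>al\<bar>*L * dist s t" by (simp add: mult_ac)
next
  show "0 \<le> \<bar>al\<bar>*L" using lipschitz_on_nonneg[OF assms(1)] by simp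
qed

definition NN :: "real \<Rightarrow> nat" where "NN s = (LEAST n. (1/2::real)^(Suc n) < s)"

lemma NN_props:
  assumes "0 < s" "s \<le> 1"
  shows "(1/2::real)^(Suc (NN s)) < s \<and> s \<le> (1/2)^(NN s)"
proof -
  obtain n where "(1/2::real)^n < s" using real_arch_pow_inv[OF assms(1), of "1/2"] by auto
  moreover have "(1/2::real)^(Suc n) \<le> (1/2)^n" by (simp add: power_decreasing)
  ultimately have ex: "\<exists>n. (1/2::real)^(Suc n) < s" by (meson le_less_trans)
  have 1: "(1/2::real)^(Suc (NN s)) < s" unfolding NN_def by (rule LeastI_ex[OF ex])
  have 2: "s \<le> (1/2)^(NN s)"
  proof (cases "NN s")
    case 0 then show ?thesis using assms by simp
  next
    case (Suc m)
    then have "m < NN s" by simp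
    then have "\<not> (1/2::real)^(Suc m) < s" unfolding NN_def by (rule not_less_Least)
    then show ?thesis using Suc by simp
  qed
  show ?thesis using 1 2 by simp
qed

lemma NN_eq:
  assumes "(1/2::real)^(Suc n) < s" "s \<le> (1/2)^n"
  shows "NN s = n"
  unfolding NN_def
proof (rule Least_equality)
  show "(1/2::real)^(Suc n) < s" by fact
  fix m assume m: "(1/2::real)^(Suc m) < s"
  show "n \<le> m"
  proof (rule ccontr)
    assume "\<not> n \<le> m"
    then have "Suc m \<le> n" by simp
    then have "(1/2::real)^n \<le> (1/2)^(Suc m)" by (rule power_decreasing) auto
    then show False using m assms(2) by simp
  qed
qed


lemma chain_path:
  fixes q :: "nat \<Rightarrow> 'a::metric_space" and c :: "nat \<Rightarrow> real \<Rightarrow> 'a"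
  assumes K: "K \<ge> 0"
    and c0: "\<And>n. c n 0 = q (Suc n)" and c1: "\<And>n. c n 1 = q n"
    and cL: "\<And>n. (K*(1/2)^n)-lipschitz_on {0..1} (c n)"
    and lim: "q \<longlonglongrightarrow> x"
  shows "\<exists>h::real\<Rightarrow>'a. (2*K)-lipschitz_on {0..1} h \<and> h 0 = x \<and> h 1 = q 0 \<and>
            h ` {0..1} \<subseteq> insert x (\<Union>n. c n ` {0..1})"
proof -
  define h where "h s = (if s \<le> 0 then x else c (NN s) (2^Suc (NN s) * s - 1))" for s
  define pc where "pc n s = c n (2^Suc n * s - 1)" for n s
  have pw: "(2::real)^Suc n * (1/2)^n = 2" for n
    using half_pow_mult[of n] by (simp add: mult_ac)
  have pw1: "(2::real)^Suc n * (1/2)^Suc n = 1" for n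
    using half_pow_mult[of "Suc n"] by (simp add: mult_ac)
  have pw2: "(2::real)^Suc (Suc n) * (1/2)^Suc n = 2" for n
    using pw[of "Suc n"] by simp
  have P: "h s = pc n s" if "s \<in> {(1/2)^Suc n..(1/2)^n}" for n s
  proof (cases "s = (1/2)^Suc n")
    case True
    have "(1/2::real)^Suc (Suc n) < (1/2)^Suc n" by simp
    then have "NN ((1/2)^Suc n) = Suc n" by (rule NN_eq[OF _ order_refl])
    then have "NN s = Suc n" unfolding True .
    have s0: "\<not> s \<le> 0" unfolding True using zero_less_power[of "1/2::real" "Suc n"] by linarith
    have eq: "2^Suc(Suc n) * s - 1 = (1::real)" unfolding True using pw2[of n] by simp
    have "h s = c (NN s) (2^Suc (NN s) * s - 1)" by (simp only: h_def if_not_P[OF s0])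
    also have "\<dots> = c (Suc n) (2^Suc (Suc n) * s - 1)" by (simp only: \<open>NN s = Suc n\<close>)
    also have "\<dots> = c (Suc n) 1" by (simp only: eq)
    finally have "h s = c (Suc n) 1" .
    also have "\<dots> = pc n s"
    proof -
      have e0: "2^Suc n * s - 1 = (0::real)" unfolding True using pw1[of n] by simp
      show ?thesis unfolding pc_def e0 c0 c1 ..
    qed
    finally show ?thesis .
  next
    case False
    then have "(1/2)^Suc n < s" "s \<le> (1/2)^n" using that by auto
    then have "NN s = n" by (rule NN_eq)
    moreover have "s > 0" using \<open>(1/2)^Suc n < s\<close> zero_less_power[of "1/2::real" "Suc n"] by linarith
    ultimately show ?thesis by (simp add: h_def pc_def)
  qed
  have hq: "h ((1/2)^n) = q n" for n
  proof -
    have e: "2^Suc n * (1/2)^n - 1 = (1::real)" using pw[of n] by simp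
    have "h ((1/2)^n) = pc n ((1/2)^n)" by (rule P) auto
    also have "\<dots> = q n" unfolding pc_def e c1 ..
    finally show ?thesis .
  qed
  have pcL: "(2*K)-lipschitz_on {(1/2)^Suc n..(1/2)^n} (pc n)" for n
  proof -
    have X: "(\<bar>2^Suc n\<bar>*(K*(1/2)^n))-lipschitz_on {(1/2)^Suc n..(1/2)^n} (\<lambda>s. c n (2^Suc n * s + (-1)))"
    proof (rule lipschitz_affine[OF cL])
      fix s :: real assume s: "s \<in> {(1/2)^Suc n..(1/2)^n}"
      have "(2::real)^Suc n * (1/2)^Suc n \<le> 2^Suc n * s" using s by (intro mult_left_mono) auto
      moreover have "(2::real)^Suc n * s \<le> 2^Suc n * (1/2)^n" using s by (intro mult_left_mono) auto
      ultimately show "2^Suc n * s + (-1) \<in> {0..1::real}" using pw[of n] pw1[of n]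
        unfolding atLeastAtMost_iff by linarith
    qed
    have eqc: "\<bar>(2::real)^Suc n\<bar>*(K*(1/2)^n) = 2*K" using pw[of n] by (simp add: mult_ac)
    show ?thesis using X unfolding eqc pc_def by simp
  qed
  have I: "(2*K)-lipschitz_on {(1/2)^n..1} h" for n
  proof (induction n)
    case 0 then show ?case using K by simp
  next
    case (Suc n)
    have "(2*K)-lipschitz_on {(1/2)^Suc n..1} (\<lambda>s. if s \<le> (1/2)^n then pc n s else h s)"
      by (rule lipschitz_on_concat[OF pcL Suc]) (rule P[THEN sym], auto)
    then show ?case
      by (rule lipschitz_on_transform) (auto simp: P)
  qed
  have pos: "\<exists>n. (1/2::real)^n \<le> t" if "t > 0" for t
    using real_arch_pow_inv[OF that, of "1/2"] by (auto intro: less_imp_le)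
  have L0: "dist (h 0) (h t) \<le> 2*K*t" if t: "0 < t" "t \<le> 1" for t
  proof -
    obtain n0 where n0: "(1/2::real)^n0 \<le> t" using pos t by blast
    have "dist x (h t) \<le> dist x (q n) + 2*K*t" if "n \<ge> n0" for n
    proof -
      have le: "(1/2::real)^n \<le> t" using power_decreasing[OF that, of "1/2::real"] n0 by linarith
      have "dist (q n) (h t) = dist (h ((1/2)^n)) (h t)" by (simp add: hq)
      also have "\<dots> \<le> 2*K * dist ((1/2)^n) t"
        by (rule lipschitz_onD[OF I[of n]]) (use le t in auto)
      also have "\<dots> \<le> 2*K*t" using le K
        by (intro mult_left_mono) (auto simp: dist_real_def)
      finally show ?thesis using dist_triangle[of x "h t" "q n"] by simp
    qed
    moreover have "(\<lambda>n. dist x (q n) + 2*K*t) \<longlonglongrightarrow> dist x x + 2*K*t"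
      by (intro tendsto_intros lim)
    ultimately have "dist x (h t) \<le> dist x x + 2*K*t"
      by (intro LIMSEQ_le_const[where a="dist x (h t)"]) auto
    then show ?thesis by (simp add: h_def)
  qed
  have Lip: "(2*K)-lipschitz_on {0..1} h"
  proof (rule lipschitz_onI)
    fix s t :: real assume s: "s \<in> {0..1}" and t: "t \<in> {0..1}"
    show "dist (h s) (h t) \<le> 2*K * dist s t"
    proof (cases "s = 0 \<or> t = 0")
      case True
      then show ?thesis using L0[of t] L0[of s] s t K
        by (cases "s = 0"; cases "t = 0") (auto simp: dist_real_def dist_commute)
    next
      case False
      then have "min s t > 0" using s t by auto
      then obtain n where n: "(1/2::real)^n \<le> min s t" using pos by blast
      show ?thesis by (rule lipschitz_onD[OF I[of n]]) (use n s t in auto)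
    qed
  qed (use K in simp)
  have img: "h ` {0..1} \<subseteq> insert x (\<Union>n. c n ` {0..1})"
  proof
    fix z assume "z \<in> h ` {0..1}"
    then obtain s where s: "s \<in> {0..1}" and z: "z = h s" by auto
    show "z \<in> insert x (\<Union>n. c n ` {0..1})"
    proof (cases "s = 0")
      case True then show ?thesis using z by (simp add: h_def)
    next
      case False
      then have s0: "s > 0" "s \<le> 1" using s by auto
      have "s \<in> {(1/2)^Suc (NN s)..(1/2)^(NN s)}" using NN_props[OF s0] by auto
      then have "h s = pc (NN s) s" by (rule P)
      moreover have "2^Suc (NN s) * s - 1 \<in> {0..1::real}"
      proof -
        define m where "m = NN s"
        have b: "(1/2::real)^Suc m < s" "s \<le> (1/2)^m" using NN_props[OF s0] by (auto simp: m_def)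
        have "(2::real)^Suc m * (1/2)^Suc m \<le> 2^Suc m * s" using b by (intro mult_left_mono) auto
        moreover have "(2::real)^Suc m * s \<le> 2^Suc m * (1/2)^m" using b by (intro mult_left_mono) auto
        ultimately have "2^Suc m * s - 1 \<in> {0..1::real}" using pw[of m] pw1[of m]
          unfolding atLeastAtMost_iff by linarith
        then show ?thesis by (simp only: m_def)
      qed
      ultimately have "z \<in> c (NN s) ` {0..1}" using z unfolding pc_def by blast
      then show ?thesis by blast
    qed
  qed
  have "h 1 = q 0" using hq[of 0] by simp
  moreover have "h 0 = x" by (simp add: h_def)
  ultimately show ?thesis using Lip img by blast
qed


lemma A_ge_1:
  assumes U: "uniform_space A \<Omega>" and aB: "a \<in> mbdry \<Omega>"
  shows "A \<ge> 1"
proof -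
  have acl: "a \<in> closure \<Omega>" "a \<notin> \<Omega>" using aB by (auto simp: mbdry_def)
  then have "\<Omega> \<noteq> {}" by auto
  then obtain u where u: "u \<in> \<Omega>" by auto
  then have "u \<noteq> a" using acl by auto
  then have "dist u a > 0" by simp
  then obtain v where v: "v \<in> \<Omega>" "dist v a < dist u a"
    using acl(1) unfolding closure_approachable by blast
  then have uv: "u \<noteq> v" by auto
  obtain g l where g: "arclength_param g l" "g 0 = u" "g l = v" "l \<le> A * dist u v"
    using U u v unfolding uniform_space_def by blast
  have "dist u v \<le> l - 0" using arclen_dist[OF g(1), of 0 l] g(1)
    by (auto simp: g arclength_param_def)
  then have "dist u v \<le> A * dist u v" using g(4) by simp
  then show ?thesis using uv by simp
qed

lemma uc_curve:
  assumes U: "uniform_space A \<Omega>" and aB: "a \<in> mbdry \<Omega>" and A1: "A \<ge> 1" and r: "r > 0"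
    and u: "u \<in> \<Omega>" "r/2 \<le> dist u a" "dist u a < 2*r"
    and v: "v \<in> \<Omega>" "r/2 \<le> dist v a" "dist v a < 2*r"
  shows "\<exists>c::real\<Rightarrow>'a::metric_space. (A*dist u v)-lipschitz_on {0..1} c \<and> c 0 = u \<and> c 1 = v \<and>
     c ` {0..1} \<subseteq> \<Omega> \<inter> {z. r/(4*A) \<le> dist z a \<and> dist z a < 4*A*r}"
proof -
  obtain g l where g: "arclength_param g l" "g 0 = u" "g l = v" "g ` {0..l} \<subseteq> \<Omega>"
    "l \<le> A * dist u v" "\<forall>t\<in>{0..l}. infdist (g t) (mbdry \<Omega>) \<ge> min t (l - t) / A"
  proof -
    have "\<exists>g l. arclength_param g l \<and> g 0 = u \<and> g l = v \<and>
        g ` {0..l} \<subseteq> \<Omega> \<and> l \<le> A * dist u v \<and>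
        (\<forall>t\<in>{0..l}. infdist (g t) (mbdry \<Omega>) \<ge> min t (l - t) / A)"
      by (rule U[unfolded uniform_space_def, THEN conjunct2, rule_format, OF u(1) v(1)])
    then show ?thesis using that by (elim exE conjE)
  qed
  have l0: "l \<ge> 0" using g(1) by (simp add: arclength_param_def)
  define c where "c \<tau> = g (l * \<tau>)" for \<tau>
  have lip: "l-lipschitz_on {0..1} c"
  proof (rule lipschitz_onI)
    fix s t :: real assume s: "s \<in> {0..1}" and t: "t \<in> {0..1}"
    have "l * s \<le> l" "l * t \<le> l" using s t l0 by (auto intro: mult_left_le)
    then have "dist (g (l * s)) (g (l * t)) \<le> \<bar>l * t - l * s\<bar>"
      using s t l0 by (intro arclen_dist_abs[OF g(1)]) auto
    also have "\<dots> = l * dist s t" using l0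
      by (simp add: dist_real_def abs_mult right_diff_distrib[symmetric] abs_minus_commute)
    finally show "dist (c s) (c t) \<le> l * dist s t" by (simp add: c_def)
  qed (rule l0)
  have lip2: "(A*dist u v)-lipschitz_on {0..1} c"
    by (rule lipschitz_on_mono[OF lip order_refl g(5)])
  have r4: "r/(4*A) \<le> r/4" using A1 r by (simp add: divide_simps)
  have img: "c \<tau> \<in> \<Omega> \<inter> {z. r/(4*A) \<le> dist z a \<and> dist z a < 4*A*r}" if \<tau>: "\<tau> \<in> {0..1}" for \<tau>
  proof -
    define t where "t = l * \<tau>"
    have t: "0 \<le> t" "t \<le> l" using \<tau> l0 by (auto simp: t_def intro: mult_left_le)
    have z\<Omega>: "g t \<in> \<Omega>" using g(4) t by auto
    have ib: "min t (l - t) / A \<le> dist (g t) a"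
    proof -
      have "t \<in> {0..l}" using t by simp
      then have "infdist (g t) (mbdry \<Omega>) \<ge> min t (l - t) / A" using g(6) by blast
      then show ?thesis using infdist_le[OF aB, of "g t"] by linarith
    qed
    have du: "dist u (g t) \<le> t" using arclen_dist[OF g(1), of 0 t] t g(2) by simp
    have dv: "dist (g t) v \<le> l - t" using arclen_dist[OF g(1), of t l] t g(3) by simp
    have tri1: "dist u a \<le> dist u (g t) + dist (g t) a" by (rule dist_triangle)
    have tri2: "dist v a \<le> dist (g t) v + dist (g t) a" using dist_triangle[of v a "g t"]
      by (simp add: dist_commute)
    have tri3: "dist (g t) a \<le> dist u (g t) + dist u a" using dist_triangle[of "g t" a u]
      by (simp add: dist_commute)
    have tri4: "dist (g t) a \<le> dist (g t) v + dist v a" by (rule dist_triangle)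
    have lower: "r/(4*A) \<le> dist (g t) a"
    proof (cases "t \<le> l - t")
      case True
      show ?thesis
      proof (cases "t \<ge> r/4")
        case True2: True
        have "r/(4*A) = (r/4)/A" by simp
        also have "\<dots> \<le> t / A" using True2 A1 by (intro divide_right_mono) auto
        also have "\<dots> = min t (l - t) / A" using True by simp
        finally show ?thesis using ib by linarith
      next
        case False
        then show ?thesis using tri1 du u r4 by linarith
      qed
    next
      case False
      show ?thesis
      proof (cases "l - t \<ge> r/4")
        case True2: True
        have "r/(4*A) = (r/4)/A" by simp
        also have "\<dots> \<le> (l - t) / A" using True2 A1 by (intro divide_right_mono) auto
        also have "\<dots> = min t (l - t) / A" using False by simp
        finally show ?thesis using ib by linarith
      next
        case False2: False
        then show ?thesis using tri2 dv v r4 by linarith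
      qed
    qed
    have duv: "dist u v \<le> dist u a + dist v a" using dist_triangle[of u v a] by (simp add: dist_commute)
    have "A * dist u v \<le> A * (dist u a + dist v a)" using A1 duv by (intro mult_left_mono) auto
    also have "\<dots> < A * (4*r)" using A1 u v by (intro mult_strict_left_mono) auto
    finally have lA: "l < A * (4*r)" using g(5) by linarith
    have "r \<le> A * r" using A1 r by simp
    then have upper: "dist (g t) a < 4*A*r" using tri3 tri4 du dv u v lA by linarith
    show ?thesis using z\<Omega> lower upper by (simp add: c_def t_def)
  qed
  have c0: "c 0 = u" "c 1 = v" using g(2) g(3) by (simp_all add: c_def)
  have cimg: "c ` {0..1} \<subseteq> \<Omega> \<inter> {z. r/(4*A) \<le> dist z a \<and> dist z a < 4*A*r}"
    using img by (rule image_subsetI)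
  show ?thesis using lip2 c0 cimg by blast
qed

theorem lemma9p9:
  fixes \<Omega> :: "'a::complete_space set" and A :: real and a :: 'a
  assumes "uniform_space A \<Omega>"
    and "a \<in> mbdry \<Omega>"
  shows "loc_annular_qc (closure \<Omega> - {a}) a (4 * A)"
proof -
  note U = assms(1) and aB = assms(2)
  have A1: "A \<ge> 1" by (rule A_ge_1[OF U aB])
  define S where "S r = \<Omega> \<inter> {z. r/(4*A) \<le> dist z a \<and> dist z a < 4*A*r}" for r
  have main: "\<exists>g. path g \<and> pathstart g = x \<and> pathfinish g = y \<and>
          path_image g \<subseteq> (closure \<Omega> - {a}) \<inter> (ball a ((4*A)*r) - ball a (r/(4*A))) \<and>
          curve_length g 0 1 \<le> ereal ((4*A) * dist x y)"
    if r: "0 < r" and x: "x \<in> (closure \<Omega> - {a}) \<inter> (ball a (2*r) - ball a r)"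
      and y: "y \<in> (closure \<Omega> - {a}) \<inter> (ball a (2*r) - ball a r)" for r x y
  proof -
    define T where "T = (closure \<Omega> - {a}) \<inter> (ball a ((4*A)*r) - ball a (r/(4*A)))"
    have r4: "r/(4*A) \<le> r" using A1 r by (simp add: divide_simps)
    have r2: "2*r \<le> 4*A*r" using A1 r by simp
    have ST: "S r \<subseteq> T"
    proof
      fix z assume "z \<in> S r"
      then have z: "z \<in> \<Omega>" "r/(4*A) \<le> dist z a" "dist z a < 4*A*r" by (auto simp: S_def)
      have "r/(4*A) > 0" using r A1 by simp
      then have "z \<noteq> a" using z by auto
      then show "z \<in> T" using z closure_subset[of \<Omega>] by (auto simp: T_def dist_commute)
    qed
    have dx: "dist a x < 2*r" "dist a y < 2*r" "r \<le> dist a x" "r \<le> dist a y" using x y by auto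
    have dx2: "dist a x < 4*A*r" "dist a y < 4*A*r" "r/(4*A) \<le> dist a x" "r/(4*A) \<le> dist a y"
      using dx r2 r4 by linarith+
    have xT: "x \<in> T" and yT: "y \<in> T" using x y dx2
      by (auto simp: T_def)
    show ?thesis
    proof (cases "x = y")
      case True
      have "0-lipschitz_on {0..1} (\<lambda>s::real. x)" by (rule lipschitz_on_constant)
      then have "curve_length (\<lambda>s::real. x) 0 1 \<le> ereal 0" by (rule lipschitz_curve_length)
      then show ?thesis using True xT
        by (intro exI[of _ "\<lambda>s. x"]) (auto simp: T_def path_def pathstart_def pathfinish_def path_image_def)
    next
      case False
      define D where "D = dist x y"
      have D0: "D > 0" using False by (simp add: D_def)
      have xa: "r \<le> dist x a" "dist x a < 2*r" and ya: "r \<le> dist y a" "dist y a < 2*r"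
        using x y by (auto simp: dist_commute)
      define \<epsilon> where "\<epsilon> = min (D/3) (min (r/2) (2*r - max (dist x a) (dist y a)))"
      have e0: "\<epsilon> > 0" using D0 r xa ya by (simp add: \<epsilon>_def)
      have eD: "\<epsilon> \<le> D/3" unfolding \<epsilon>_def by (rule min.cobounded1)
      have er: "\<epsilon> \<le> r/2" unfolding \<epsilon>_def by (intro min.coboundedI2 min.cobounded1)
      have em: "\<epsilon> \<le> 2*r - max (dist x a) (dist y a)" unfolding \<epsilon>_def
        by (intro min.coboundedI2 min.cobounded2)
      have ex: "\<epsilon> \<le> 2*r - dist x a" and ey: "\<epsilon> \<le> 2*r - dist y a"
        using em max.cobounded1[of "dist x a" "dist y a"] max.cobounded2[of "dist y a" "dist x a"] by linarith+
      have approx: "\<exists>s. (\<forall>n. s n \<in> \<Omega> \<and> dist (s n) p < \<epsilon>*(1/2)^n) \<and> s \<longlonglongrightarrow> p"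
        if p: "p \<in> closure \<Omega>" for p
      proof -
        have "\<forall>n. \<exists>u. u \<in> \<Omega> \<and> dist u p < \<epsilon>*(1/2)^n"
        proof
          fix n :: nat
          have "\<epsilon>*(1/2)^n > 0" using e0 by simp
          then show "\<exists>u. u \<in> \<Omega> \<and> dist u p < \<epsilon>*(1/2)^n"
            using p unfolding closure_approachable by blast
        qed
        then obtain s where s: "\<forall>n. s n \<in> \<Omega> \<and> dist (s n) p < \<epsilon>*(1/2)^n"
          by metis
        have "(\<lambda>n. \<epsilon>*(1/2::real)^n) \<longlonglongrightarrow> \<epsilon>*0"
          by (rule tendsto_mult[OF tendsto_const LIMSEQ_power_zero]) simp
        then have lim0: "(\<lambda>n. \<epsilon>*(1/2::real)^n) \<longlonglongrightarrow> 0" by simp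
        have ev: "eventually (\<lambda>n. norm (dist (s n) p) \<le> \<epsilon>*(1/2::real)^n) sequentially"
          by (rule always_eventually) (use s in \<open>simp add: less_imp_le\<close>)
        have "(\<lambda>n. dist (s n) p) \<longlonglongrightarrow> 0" by (rule Lim_null_comparison[OF ev lim0])
        then have "s \<longlonglongrightarrow> p" by (rule tendsto_dist_iff[THEN iffD2])
        then show ?thesis using s by blast
      qed
      have epow: "\<epsilon>*(1/2)^n \<le> \<epsilon>" for n
        using e0 by (simp add: mult_left_le power_le_one)
      have chainside: "\<exists>(h::real\<Rightarrow>'a) (s::nat\<Rightarrow>'a). (3*A*\<epsilon>)-lipschitz_on {0..1} h \<and> h 0 = p \<and> h 1 = s 0 \<and>
          h ` {0..1} \<subseteq> insert p (S r) \<and> s 0 \<in> \<Omega> \<and> dist (s 0) p < \<epsilon> \<and>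
          r/2 \<le> dist (s 0) a \<and> dist (s 0) a < 2*r"
        if p: "p \<in> closure \<Omega>" "r \<le> dist p a" "\<epsilon> \<le> 2*r - dist p a" for p
      proof -
        obtain s where s: "\<forall>n. s n \<in> \<Omega> \<and> dist (s n) p < \<epsilon>*(1/2)^n" and sl: "s \<longlonglongrightarrow> p"
          using approx[OF p(1)] by blast
        have sa: "r/2 \<le> dist (s n) a \<and> dist (s n) a < 2*r" for n
        proof -
          have "dist (s n) p < \<epsilon>" using s epow[of n] by (meson less_le_trans)
          moreover have "dist p a \<le> dist p (s n) + dist (s n) a" by (rule dist_triangle)
          moreover have "dist (s n) a \<le> dist (s n) p + dist p a" by (rule dist_triangle)
          ultimately show ?thesis using p er by (simp add: dist_commute)
        qed
        have "\<forall>n. \<exists>c::real\<Rightarrow>'a. (A*dist (s (Suc n)) (s n))-lipschitz_on {0..1} c \<and> c 0 = s (Suc n) \<and> c 1 = s n \<and>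
            c ` {0..1} \<subseteq> S r"
        proof
          fix n
          have m1: "s (Suc n) \<in> \<Omega>" "s n \<in> \<Omega>" using s by blast+
          have m2: "r/2 \<le> dist (s (Suc n)) a" "dist (s (Suc n)) a < 2*r"
            "r/2 \<le> dist (s n) a" "dist (s n) a < 2*r" using sa[of n] sa[of "Suc n"] by auto
          show "\<exists>c::real\<Rightarrow>'a. (A*dist (s (Suc n)) (s n))-lipschitz_on {0..1} c \<and> c 0 = s (Suc n) \<and> c 1 = s n \<and>
            c ` {0..1} \<subseteq> S r"
            using uc_curve[OF U aB A1 r m1(1) m2(1) m2(2) m1(2) m2(3) m2(4)] unfolding S_def .
        qed
        then obtain c :: "nat \<Rightarrow> real \<Rightarrow> 'a" where c: "\<And>n. (A*dist (s (Suc n)) (s n))-lipschitz_on {0..1} (c n)"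
          "\<And>n. c n 0 = s (Suc n)" "\<And>n. c n 1 = s n" "\<And>n. c n ` {0..1} \<subseteq> S r"
          by metis
        have K0: "3/2*A*\<epsilon> \<ge> 0" using A1 e0 by simp
        have cL: "(3/2*A*\<epsilon>*(1/2)^n)-lipschitz_on {0..1} (c n)" for n
        proof (rule lipschitz_on_mono[OF c(1) order_refl])
          have "dist (s (Suc n)) (s n) \<le> dist (s (Suc n)) p + dist (s n) p"
            using dist_triangle[of "s (Suc n)" "s n" p] by (simp add: dist_commute)
          also have "\<dots> \<le> \<epsilon>*(1/2)^Suc n + \<epsilon>*(1/2)^n"
            using s[rule_format, of n] s[rule_format, of "Suc n"] by simp
          also have "\<dots> = 3/2*\<epsilon>*(1/2)^n" by simp
          finally have "A * dist (s (Suc n)) (s n) \<le> A * (3/2*\<epsilon>*(1/2)^n)"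
            using A1 by (intro mult_left_mono) auto
          then show "A * dist (s (Suc n)) (s n) \<le> 3/2*A*\<epsilon>*(1/2)^n" by (simp add: mult_ac)
        qed
        obtain h :: "real \<Rightarrow> 'a" where h: "(2*(3/2*A*\<epsilon>))-lipschitz_on {0..1} h" "h 0 = p" "h 1 = s 0"
          "h ` {0..1} \<subseteq> insert p (\<Union>n. c n ` {0..1})"
          using chain_path[OF K0 c(2) c(3) cL sl] by blast
        have "h ` {0..1} \<subseteq> insert p (S r)" using h(4) c(4) by blast
        moreover have "(3*A*\<epsilon>)-lipschitz_on {0..1} h" using h(1) by (simp add: mult.assoc)
        moreover have "dist (s 0) p < \<epsilon>" using s[rule_format, of 0] by simp
        moreover have "s 0 \<in> \<Omega>" using s by blast
        ultimately show ?thesis using h(2) h(3) sa[of 0] by blast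
      qed
      have xc: "x \<in> closure \<Omega>" and yc: "y \<in> closure \<Omega>" using x y by auto
      obtain hx :: "real \<Rightarrow> 'a" and x0 :: "nat \<Rightarrow> 'a" where hx: "(3*A*\<epsilon>)-lipschitz_on {0..1} hx" "hx 0 = x" "hx 1 = x0 0"
          "hx ` {0..1} \<subseteq> insert x (S r)" "x0 0 \<in> \<Omega>" "dist (x0 0) x < \<epsilon>"
          "r/2 \<le> dist (x0 0) a" "dist (x0 0) a < 2*r"
        using chainside[OF xc xa(1) ex] by blast
      obtain hy :: "real \<Rightarrow> 'a" and y0 :: "nat \<Rightarrow> 'a" where hy: "(3*A*\<epsilon>)-lipschitz_on {0..1} hy" "hy 0 = y" "hy 1 = y0 0"
          "hy ` {0..1} \<subseteq> insert y (S r)" "y0 0 \<in> \<Omega>" "dist (y0 0) y < \<epsilon>"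
          "r/2 \<le> dist (y0 0) a" "dist (y0 0) a < 2*r"
        using chainside[OF yc ya(1) ey] by blast
      obtain m :: "real \<Rightarrow> 'a" where m: "(A*dist (x0 0) (y0 0))-lipschitz_on {0..1} m" "m 0 = x0 0" "m 1 = y0 0"
          "m ` {0..1} \<subseteq> S r"
        using uc_curve[OF U aB A1 r hx(5) hx(7) hx(8) hy(5) hy(7) hy(8)] unfolding S_def by blast
      define L where "L = 4*A*D"
      have A0: "A \<ge> 0" using A1 by simp
      have "A * (12 * \<epsilon>) \<le> A * (4 * D)" using eD A0 by (intro mult_left_mono) auto
      then have "\<bar>4\<bar> * (3*A*\<epsilon>) \<le> L" unfolding L_def by (simp add: mult_ac)
      then have F1le: "\<bar>4\<bar> * (3*A*\<epsilon>) \<le> L" .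
      have F1a: "(\<bar>4\<bar> * (3*A*\<epsilon>))-lipschitz_on {0..1/4} (\<lambda>s. hx (4 * s + 0))"
        by (rule lipschitz_affine[OF hx(1)]) auto
      have F1: "L-lipschitz_on {0..1/4} (\<lambda>s. hx (4 * s + 0))"
        by (rule lipschitz_on_mono[OF F1a order_refl F1le])
      have "\<bar>-4\<bar> * (3*A*\<epsilon>) \<le> L" using \<open>\<bar>4\<bar> * (3*A*\<epsilon>) \<le> L\<close> by simp
      then have F3le: "\<bar>-4\<bar> * (3*A*\<epsilon>) \<le> L" .
      have F3a: "(\<bar>-4\<bar> * (3*A*\<epsilon>))-lipschitz_on {3/4..1} (\<lambda>s. hy ((-4) * s + 4))"
        by (rule lipschitz_affine[OF hy(1)]) auto
      have F3: "L-lipschitz_on {3/4..1} (\<lambda>s. hy ((-4) * s + 4))"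
        by (rule lipschitz_on_mono[OF F3a order_refl F3le])
      have dxy: "dist (x0 0) (y0 0) \<le> D + 2*\<epsilon>"
      proof -
        have "dist (x0 0) (y0 0) \<le> dist (x0 0) x + dist x (y0 0)" by (rule dist_triangle)
        moreover have "dist x (y0 0) \<le> dist x y + dist y (y0 0)" by (rule dist_triangle)
        ultimately show ?thesis using hx(6) hy(6) by (simp add: D_def dist_commute)
      qed
      have "A * dist (x0 0) (y0 0) \<le> A * (D + 2*\<epsilon>)" using dxy A0 by (rule mult_left_mono)
      moreover have "A * (D + 2*\<epsilon>) \<le> A * (2*D)" using eD D0 A0 by (intro mult_left_mono) auto
      ultimately have "\<bar>2\<bar> * (A*dist (x0 0) (y0 0)) \<le> L" unfolding L_def by simp
      then have F2le: "\<bar>2\<bar> * (A*dist (x0 0) (y0 0)) \<le> L" .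
      have F2a: "(\<bar>2\<bar> * (A*dist (x0 0) (y0 0)))-lipschitz_on {1/4..3/4} (\<lambda>s. m (2 * s + (-1/2)))"
        by (rule lipschitz_affine[OF m(1)]) auto
      have F2: "L-lipschitz_on {1/4..3/4} (\<lambda>s. m (2 * s + (-1/2)))"
        by (rule lipschitz_on_mono[OF F2a order_refl F2le])
      have G23: "L-lipschitz_on {1/4..1} (\<lambda>s. if s \<le> 3/4 then m (2 * s + (-1/2)) else hy ((-4) * s + 4))"
        by (rule lipschitz_on_concat[OF F2 F3]) (simp add: m(3) hy(3))
      define g where "g = (\<lambda>s::real. if s \<le> 1/4 then hx (4 * s + 0) else
          (if s \<le> 3/4 then m (2 * s + (-1/2)) else hy ((-4) * s + 4)))"
      have G: "L-lipschitz_on {0..1} g"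
        unfolding g_def by (rule lipschitz_on_concat[OF F1 G23]) (simp add: m(2) hx(3))
      have p1: "path g" unfolding path_def by (rule lipschitz_on_continuous_on[OF G])
      have p2: "pathstart g = x" using hx(2) by (simp add: pathstart_def g_def)
      have p3: "pathfinish g = y" using hy(2) by (simp add: pathfinish_def g_def)
      have p4: "path_image g \<subseteq> T"
      proof
        fix z assume "z \<in> path_image g"
        then obtain s where s: "s \<in> {0..1}" "z = g s" by (auto simp: path_image_def)
        have "z \<in> insert x (S r) \<or> z \<in> S r \<or> z \<in> insert y (S r)"
        proof (cases "s \<le> 1/4")
          case True
          then have "4 * s + 0 \<in> {0..1}" using s by auto
          then have "hx (4 * s + 0) \<in> insert x (S r)" using hx(4) by blast
          moreover have "z = hx (4 * s + 0)" using True s(2) unfolding g_def by simp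
          ultimately show ?thesis by blast
        next
          case False
          show ?thesis
          proof (cases "s \<le> 3/4")
            case True
            then have "2 * s + (-1/2) \<in> {0..1}" using s False by auto
            then have "m (2 * s + (-1/2)) \<in> S r" using m(4) by blast
            moreover have "z = m (2 * s + (-1/2))" using True False s(2) unfolding g_def by simp
            ultimately show ?thesis by blast
          next
            case False2: False
            then have "(-4) * s + 4 \<in> {0..1}" using s by auto
            then have "hy ((-4) * s + 4) \<in> insert y (S r)" using hy(4) by blast
            moreover have "z = hy ((-4) * s + 4)" using False2 False s(2) unfolding g_def by simp
            ultimately show ?thesis by blast
          qed
        qed
        then show "z \<in> T" using ST xT yT by blast
      qed
      have p5: "curve_length g 0 1 \<le> ereal ((4*A) * dist x y)"
        using lipschitz_curve_length[OF G] by (simp add: L_def D_def)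
      show ?thesis unfolding T_def[symmetric]
        by (rule exI[of _ g], intro conjI p1 p2 p3 p4 p5)
    qed
  qed
  have Q: "\<forall>r. 0 < r \<and> r \<le> 1 \<longrightarrow>
     (\<forall>x\<in>(closure \<Omega> - {a}) \<inter> (ball a (2*r) - ball a r). \<forall>y\<in>(closure \<Omega> - {a}) \<inter> (ball a (2*r) - ball a r).
        \<exists>g. path g \<and> pathstart g = x \<and> pathfinish g = y \<and>
          path_image g \<subseteq> (closure \<Omega> - {a}) \<inter> (ball a ((4*A)*r) - ball a (r/(4*A))) \<and>
          curve_length g 0 1 \<le> ereal ((4*A) * dist x y))"
  proof (rule allI, rule impI, rule ballI, rule ballI)
    fix r x y assume r: "0 < r \<and> r \<le> 1"
      and x: "x \<in> (closure \<Omega> - {a}) \<inter> (ball a (2*r) - ball a r)"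
      and y: "y \<in> (closure \<Omega> - {a}) \<inter> (ball a (2*r) - ball a r)"
    have r0: "0 < r" using r by simp
    show "\<exists>g. path g \<and> pathstart g = x \<and> pathfinish g = y \<and>
          path_image g \<subseteq> (closure \<Omega> - {a}) \<inter> (ball a ((4*A)*r) - ball a (r/(4*A))) \<and>
          curve_length g 0 1 \<le> ereal ((4*A) * dist x y)"
      by (rule main[OF r0 x y])
  qed
  have R: "\<exists>r0>0. \<forall>r. 0 < r \<and> r \<le> r0 \<longrightarrow>
     (\<forall>x\<in>(closure \<Omega> - {a}) \<inter> (ball a (2*r) - ball a r). \<forall>y\<in>(closure \<Omega> - {a}) \<inter> (ball a (2*r) - ball a r).
        \<exists>g. path g \<and> pathstart g = x \<and> pathfinish g = y \<and>
          path_image g \<subseteq> (closure \<Omega> - {a}) \<inter> (ball a ((4*A)*r) - ball a (r/(4*A))) \<and>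
          curve_length g 0 1 \<le> ereal ((4*A) * dist x y))"
    by (rule exI[where x="1::real"], rule conjI, simp, rule Q)
  have two: "2 \<le> 4*A" using A1 by simp
  show ?thesis unfolding loc_annular_qc_def by (rule conjI[OF two R])
qed

end
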